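(* Let $\omega\in(0,1)$ and let $\alpha=(\alpha_m)$, $\beta=(\beta_m)$ be non-negative non-increasing null sequences with $\alpha_1,\beta_1\le1$. Then there is $C>0$ with $\alpha_m\le C\beta_m$ for all $m$ if and only if there exists a positive integer $r$ such that $\widetilde K^{(\omega)}_n(\alpha)\le\widetilde K^{(\omega)}_{n+r}(\beta)$ for every $n\in\mathbb N\cup\{0\}$.
   Context: For a non-negative non-increasing null sequence $\gamma$ and $n\ge0$: $K^{(\omega)}_n(\gamma)=|\{m:\omega^{n+1}<\gamma_m\le\omega^n\}|$ and $\widetilde K^{(\omega)}_n(\gamma)=\sum_{i=0}^nK^{(\omega)}_i(\gamma)$. *)

theory Defs
  imports "HOL-Analysis.Analysis"
begin

text \<open>Sequences are indexed from 1: gamma m for m \<ge> 1; the value at 0 is ignored.\<close>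

definition nnni_null :: "(nat \<Rightarrow> real) \<Rightarrow> bool" where
  "nnni_null g \<longleftrightarrow> (\<forall>m\<ge>1. 0 \<le> g m) \<and> (\<forall>m\<ge>1. g (Suc m) \<le> g m) \<and> (g \<longlonglongrightarrow> 0)"

definition K_om :: "real \<Rightarrow> nat \<Rightarrow> (nat \<Rightarrow> real) \<Rightarrow> nat" where
  "K_om \<omega> n g = card {m. m \<ge> 1 \<and> \<omega> ^ (n+1) < g m \<and> g m \<le> \<omega> ^ n}"

definition Kt_om :: "real \<Rightarrow> nat \<Rightarrow> (nat \<Rightarrow> real) \<Rightarrow> nat" where
  "Kt_om \<omega> n g = (\<Sum>i=0..n. K_om \<omega> i g)"

end

theory Submission
  imports Defs
begin

lemma nn_dec:
  assumes "nnni_null g" "1 \<le> k" "k \<le> m"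
  shows "g m \<le> g k"
  using assms(3)
proof (induction m rule: dec_induct)
  case base then show ?case by simp
next
  case (step m)
  have "g (Suc m) \<le> g m" using assms(1,2) step(1) by (simp add: nnni_null_def)
  then show ?case using step(3) by linarith
qed

lemma nn_fin:
  assumes "nnni_null g" "0 < t"
  shows "finite {m. 1 \<le> m \<and> t < g m}"
proof -
  from assms have "g \<longlonglongrightarrow> 0" by (simp add: nnni_null_def)
  hence "eventually (\<lambda>m. g m < t) sequentially" using order_tendstoD(2) assms(2) by blast
  then obtain N where N: "\<forall>m\<ge>N. g m < t" by (auto simp: eventually_sequentially)
  have "{m. 1 \<le> m \<and> t < g m} \<subseteq> {..<N}"
  proof
    fix m assume "m \<in> {m. 1 \<le> m \<and> t < g m}"
    then show "m \<in> {..<N}" using N by (metis lessThan_iff linorder_not_less mem_Collect_eq order_less_asym)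
  qed
  thus ?thesis using finite_subset by blast
qed

lemma Kt_eq:
  assumes "nnni_null g" "g 1 \<le> 1" "0 < \<omega>" "\<omega> < 1"
  shows "Kt_om \<omega> n g = card {m. 1 \<le> m \<and> \<omega>^(n+1) < g m}"
proof (induction n)
  case 0
  have "{m. m \<ge> 1 \<and> \<omega> ^ (0+1) < g m \<and> g m \<le> \<omega> ^ 0} = {m. 1 \<le> m \<and> \<omega>^(0+1) < g m}"
  proof -
    have "\<And>m. 1 \<le> m \<Longrightarrow> g m \<le> 1" using nn_dec[OF assms(1)] assms(2) order_trans by blast
    then show ?thesis by auto
  qed
  then show ?case by (simp add: Kt_om_def K_om_def)
next
  case (Suc n)
  let ?A = "{m. 1 \<le> m \<and> \<omega>^(n+1) < g m}"
  let ?B = "{m. m \<ge> 1 \<and> \<omega> ^ (Suc n+1) < g m \<and> g m \<le> \<omega> ^ Suc n}"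
  have le: "\<omega>^(Suc n + 1) \<le> \<omega>^(n+1)"
    using assms(3,4) by (simp add: power_decreasing)
  have pos: "0 < \<omega>^(Suc n + 1)" using assms(3) by simp
  have F: "finite {m. 1 \<le> m \<and> \<omega>^(Suc n+1) < g m}" using nn_fin[OF assms(1) pos] .
  have eq: "{m. 1 \<le> m \<and> \<omega>^(Suc n+1) < g m} = ?A \<union> ?B" using le by auto
  have "?A \<subseteq> {m. 1 \<le> m \<and> \<omega>^(Suc n+1) < g m}"
  proof
    fix x assume "x \<in> ?A"
    then show "x \<in> {m. 1 \<le> m \<and> \<omega>^(Suc n+1) < g m}" using le by simp
  qed
  hence "finite ?A" using F finite_subset by blast
  moreover have "?B \<subseteq> {m. 1 \<le> m \<and> \<omega>^(Suc n+1) < g m}" by blast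
  hence "finite ?B" using F finite_subset by blast
  moreover have "?A \<inter> ?B = {}" by auto
  ultimately have "card (?A \<union> ?B) = card ?A + card ?B" by (rule card_Un_disjoint)
  moreover have "Kt_om \<omega> (Suc n) g = Kt_om \<omega> n g + K_om \<omega> (Suc n) g"
    by (simp add: Kt_om_def)
  ultimately show ?case using Suc eq by (simp add: K_om_def)
qed

lemma mem_le_card:
  assumes "nnni_null g" "0 < t" "1 \<le> m" "t < g m"
  shows "m \<le> card {m. 1 \<le> m \<and> t < g m}"
proof -
  have "{1..m} \<subseteq> {m. 1 \<le> m \<and> t < g m}"
  proof
    fix k assume "k \<in> {1..m}"
    then have "1 \<le> k" "k \<le> m" by auto
    then have "g m \<le> g k" using nn_dec[OF assms(1)] by blast
    then show "k \<in> {m. 1 \<le> m \<and> t < g m}" using assms(4) \<open>1 \<le> k\<close> by simp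
  qed
  from card_mono[OF nn_fin[OF assms(1,2)] this] show ?thesis by simp
qed

lemma le_card_mem:
  assumes "nnni_null g" "0 < t" "1 \<le> m" "m \<le> card {m. 1 \<le> m \<and> t < g m}"
  shows "t < g m"
proof (rule ccontr)
  assume "\<not> t < g m"
  have "{m. 1 \<le> m \<and> t < g m} \<subseteq> {1..<m}"
  proof
    fix k assume k: "k \<in> {m. 1 \<le> m \<and> t < g m}"
    have "k < m"
    proof (rule ccontr)
      assume "\<not> k < m"
      then have "g k \<le> g m" using nn_dec[OF assms(1) assms(3)] by simp
      then show False using k \<open>\<not> t < g m\<close> by simp
    qed
    then show "k \<in> {1..<m}" using k by simp
  qed
  from card_mono[OF _ this] have "card {m. 1 \<le> m \<and> t < g m} \<le> m - 1" by simp
  thus False using assms(3,4) by linarith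
qed

theorem lemma2p6:
  fixes \<omega> :: real and \<alpha> \<beta> :: "nat \<Rightarrow> real"
  assumes "0 < \<omega>" "\<omega> < 1"
    and "nnni_null \<alpha>" "nnni_null \<beta>"
    and "\<alpha> 1 \<le> 1" "\<beta> 1 \<le> 1"
  shows "(\<exists>C>0. \<forall>m\<ge>1. \<alpha> m \<le> C * \<beta> m) \<longleftrightarrow>
         (\<exists>r::nat. r > 0 \<and> (\<forall>n. Kt_om \<omega> n \<alpha> \<le> Kt_om \<omega> (n + r) \<beta>))"
proof
  assume "\<exists>C>0. \<forall>m\<ge>1. \<alpha> m \<le> C * \<beta> m"
  then obtain C where C: "C > 0" "\<forall>m\<ge>1. \<alpha> m \<le> C * \<beta> m" by blast
  have "(\<lambda>n. \<omega>^n) \<longlonglongrightarrow> 0" using assms(1,2) by (intro LIMSEQ_realpow_zero) auto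
  hence "eventually (\<lambda>n. \<omega>^n < 1/C) sequentially" using C(1) by (intro order_tendstoD(2)[OF \<open>(\<lambda>n. \<omega>^n) \<longlonglongrightarrow> 0\<close>]) simp
  then obtain N where N: "\<forall>n\<ge>N. \<omega>^n < 1/C" by (auto simp: eventually_sequentially)
  define r where "r = N + 1"
  have "\<omega>^r < 1/C" using N unfolding r_def by (metis le_add1)
  hence r: "\<omega>^r * C < 1" using C(1) by (simp add: field_simps)
  show "\<exists>r::nat. r > 0 \<and> (\<forall>n. Kt_om \<omega> n \<alpha> \<le> Kt_om \<omega> (n + r) \<beta>)"
  proof (intro exI conjI allI)
    show "r > 0" by (simp add: r_def)
    fix n
    have pos: "0 < \<omega>^(n+r+1)" using assms(1) by simp
    have "{m. 1 \<le> m \<and> \<omega>^(n+1) < \<alpha> m} \<subseteq> {m. 1 \<le> m \<and> \<omega>^(n+r+1) < \<beta> m}"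
    proof safe
      fix m assume m: "1 \<le> m" "\<omega>^(n+1) < \<alpha> m"
      have p1: "0 < \<omega>^(n+1)" using assms(1) by simp
      have "\<omega>^(n+1) * (\<omega>^r * C) < \<omega>^(n+1)" using mult_strict_left_mono[OF r p1] by simp
      also have "\<dots> < C * \<beta> m" using m C(2) by force
      finally have "C * \<omega>^(n+r+1) < C * \<beta> m" by (simp add: power_add algebra_simps)
      thus "\<omega>^(n+r+1) < \<beta> m" using C(1) by simp
    qed
    from card_mono[OF nn_fin[OF assms(4) pos] this]
    show "Kt_om \<omega> n \<alpha> \<le> Kt_om \<omega> (n + r) \<beta>"
      using Kt_eq[OF assms(3,5,1,2)] Kt_eq[OF assms(4,6,1,2)] by simp
  qed
next
  assume "\<exists>r::nat. r > 0 \<and> (\<forall>n. Kt_om \<omega> n \<alpha> \<le> Kt_om \<omega> (n + r) \<beta>)"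
  then obtain r where r: "\<forall>n. Kt_om \<omega> n \<alpha> \<le> Kt_om \<omega> (n + r) \<beta>" by blast
  have wp: "0 < \<omega>^(r+1)" using assms(1) by simp
  show "\<exists>C>0. \<forall>m\<ge>1. \<alpha> m \<le> C * \<beta> m"
  proof (intro exI conjI allI impI)
    show "1 / \<omega>^(r+1) > 0" using wp by simp
    fix m :: nat assume m: "1 \<le> m"
    show "\<alpha> m \<le> 1 / \<omega>^(r+1) * \<beta> m"
    proof (cases "\<alpha> m \<le> 0")
      case True
      have "0 \<le> \<beta> m" using assms(4) m by (simp add: nnni_null_def)
      then have "0 \<le> 1 / \<omega>^(r+1) * \<beta> m" using wp by simp
      then show ?thesis using True by linarith
    next
      case False
      hence am: "0 < \<alpha> m" by simp
      have "(\<lambda>n. \<omega>^n) \<longlonglongrightarrow> 0" using assms(1,2) by (intro LIMSEQ_realpow_zero) auto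
      hence "eventually (\<lambda>n. \<omega>^n < \<alpha> m) sequentially" using am by (intro order_tendstoD(2)[OF \<open>(\<lambda>n. \<omega>^n) \<longlonglongrightarrow> 0\<close>]) simp
      then obtain N where N: "\<forall>n\<ge>N. \<omega>^n < \<alpha> m" by (auto simp: eventually_sequentially)
      have ex: "\<omega>^(N+1) < \<alpha> m" using N by (metis le_add1)
      define n where "n = (LEAST k. \<omega>^(k+1) < \<alpha> m)"
      have n1: "\<omega>^(n+1) < \<alpha> m" unfolding n_def by (rule LeastI[of _ N]) (rule ex)
      have n2: "\<alpha> m \<le> \<omega>^n"
      proof (cases n)
        case 0
        have "\<alpha> m \<le> \<alpha> 1" using nn_dec[OF assms(3) _ m] by simp
        then show ?thesis using 0 assms(5) by simp
      next
        case (Suc k)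
        have "\<not> \<omega>^(k+1) < \<alpha> m"
          using not_less_Least[of k "\<lambda>k. \<omega>^(k+1) < \<alpha> m"] Suc n_def by simp
        then show ?thesis using Suc by simp
      qed
      have p1: "0 < \<omega>^(n+1)" using assms(1) by simp
      have p2: "0 < \<omega>^(n+r+1)" using assms(1) by simp
      have "m \<le> card {m. 1 \<le> m \<and> \<omega>^(n+1) < \<alpha> m}" by (rule mem_le_card[OF assms(3) p1 m n1])
      also have "\<dots> = Kt_om \<omega> n \<alpha>" using Kt_eq[OF assms(3,5,1,2)] by simp
      also have "\<dots> \<le> Kt_om \<omega> (n + r) \<beta>" using r by blast
      also have "\<dots> = card {m. 1 \<le> m \<and> \<omega>^(n+r+1) < \<beta> m}" using Kt_eq[OF assms(4,6,1,2)] by simp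
      finally have "\<omega>^(n+r+1) < \<beta> m" by (rule le_card_mem[OF assms(4) p2 m])
      moreover have "\<alpha> m * \<omega>^(r+1) \<le> \<omega>^n * \<omega>^(r+1)" using mult_right_mono[OF n2 less_imp_le[OF wp]] .
      moreover have "\<omega>^n * \<omega>^(r+1) = \<omega>^(n+r+1)" by (simp add: power_add)
      ultimately have "\<alpha> m * \<omega>^(r+1) < \<beta> m" by linarith
      then show ?thesis using wp by (simp add: field_simps)
    qed
  qed
qed

end
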